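(* Let $k$ be a field, $R = k[[X]]$, and $M$ a free $R$-module of rank $h$. Let $0 = M_0 \subseteq M_1 \subseteq \dots \subseteq M_l = M$ be direct summands with $M_i$ free of rank $h_i$ ($h_0 = 0$). Let $\overline{M_i} := M_i \otimes_R k$, let $\overline{L}$ be a $k$-subspace of $\overline{M}$, and $d_i := \dim_k(\overline{L} \cap \overline{M_i})$ (so $0 \leq d_{i+1} - d_i \leq h_{i+1} - h_i$). Let $d_0' = 0, d_1', \dots, d_l'$ be integers with $d_l' = d_l$, $0 \leq d_{i+1}' - d_i' \leq h_{i+1} - h_i$ for $0 \le i \le l-1$, and $d_i' \leq d_i$ for $1 \leq i \leq l-1$. Then there exists a direct summand $L \subseteq M$ with $L \otimes_R k = \overline{L}$ (as subspaces of $\overline{M}$) such that $\dim_{k((X))}\big((L \otimes_R k((X))) \cap (M_i \otimes_R k((X)))\big) = d_i'$ for all $1 \leq i \leq l$. *)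

theory Defs
  imports "HOL-Analysis.Analysis" "HOL-Computational_Algebra.Formal_Laurent_Series"
begin

text \<open>The free module M of rank h over R = k[[X]] is modelled as R^'n with CARD('n) = h.\<close>

definition scaleR_fps :: "'a::field fps \<Rightarrow> 'a fps ^ 'n \<Rightarrow> 'a fps ^ 'n" where
  "scaleR_fps c v = (\<chi> i. c * vec_nth v i)"

definition scale_k :: "'a::field \<Rightarrow> 'a ^ 'n \<Rightarrow> 'a ^ 'n" where
  "scale_k c v = (\<chi> i. c * vec_nth v i)"

definition scale_K :: "'a::field fls \<Rightarrow> 'a fls ^ 'n \<Rightarrow> 'a fls ^ 'n" where
  "scale_K c v = (\<chi> i. c * vec_nth v i)"

text \<open>R-submodules, direct summands, free of given rank.\<close>
definition submoduleR :: "('a::field fps ^ 'n) set \<Rightarrow> bool" where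
  "submoduleR S = module.subspace scaleR_fps S"

definition direct_summand :: "('a::field fps ^ 'n) set \<Rightarrow> bool" where
  "direct_summand L \<longleftrightarrow> submoduleR L \<and>
     (\<exists>N. submoduleR N \<and> L \<inter> N = {0} \<and> {x + y | x y. x \<in> L \<and> y \<in> N} = UNIV)"

definition free_of_rank :: "('a::field fps ^ 'n) set \<Rightarrow> nat \<Rightarrow> bool" where
  "free_of_rank S r \<longleftrightarrow> (\<exists>B. finite B \<and> card B = r \<and>
     \<not> module.dependent scaleR_fps B \<and> module.span scaleR_fps B = S)"

text \<open>Reduction mod X: for a direct summand S, S \<otimes>_R k is the image of S in k^'n.\<close>
definition red :: "'a::field fps ^ 'n \<Rightarrow> 'a ^ 'n" where
  "red v = (\<chi> i. fps_nth (vec_nth v i) 0)"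

text \<open>Base change to K = k((X)): S \<otimes>_R K is the K-span of S inside K^'n.\<close>
definition ext :: "'a::field fps ^ 'n \<Rightarrow> 'a fls ^ 'n" where
  "ext v = (\<chi> i. fps_to_fls (vec_nth v i))"

definition tensor_K :: "('a::field fps ^ 'n) set \<Rightarrow> ('a fls ^ 'n) set" where
  "tensor_K S = module.span scale_K (ext ` S)"

definition subspace_k :: "('a::field ^ 'n) set \<Rightarrow> bool" where
  "subspace_k S = module.subspace scale_k S"

definition dim_k :: "('a::field ^ 'n) set \<Rightarrow> nat" where
  "dim_k S = vector_space.dim scale_k S"

definition dim_K :: "('a::field fls ^ 'n) set \<Rightarrow> nat" where
  "dim_K S = vector_space.dim scale_K S"

end

theory Submission
  imports Defs
begin

interpretation Rm: module "(*s) :: 'a::comm_ring_1 \<Rightarrow> 'a^'n \<Rightarrow> 'a^'n"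
  by unfold_locales (vector algebra_simps)+

lemma scaleR_fps_eq: "scaleR_fps = (*s)"
  by (auto simp: scaleR_fps_def vector_scalar_mult_def fun_eq_iff)
lemma scale_k_eq: "scale_k = (*s)"
  by (auto simp: scale_k_def vector_scalar_mult_def fun_eq_iff)
lemma scale_K_eq: "scale_K = (*s)"
  by (auto simp: scale_K_def vector_scalar_mult_def fun_eq_iff)

definition imod :: "('r::zero \<Rightarrow> 'v \<Rightarrow> 'v::comm_monoid_add) \<Rightarrow> 'v set \<Rightarrow> 'c set \<Rightarrow> ('c \<Rightarrow> 'v) \<Rightarrow> bool" where
  "imod s U J u \<longleftrightarrow> (\<forall>c. (\<Sum>j\<in>J. s (c j) (u j)) \<in> U \<longrightarrow> (\<forall>j\<in>J. c j = 0))"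

context module begin

lemma my_span_image_family:
  assumes "finite J"
  shows "span (u ` J) = {\<Sum>j\<in>J. scale (c j) (u j) | c. True}"
  using assms
proof (induction J rule: finite_induct)
  case empty then show ?case by simp
next
  case (insert a J)
  show ?case
  proof (intro set_eqI iffI)
    fix x assume "x \<in> span (u ` insert a J)"
    then obtain k where "x - scale (k) (u a) \<in> span (u ` J)" by (auto simp: span_insert)
    then obtain c where c: "x - scale (k) (u a) = (\<Sum>j\<in>J. scale (c j) (u j))" using insert.IH by auto
    have "(\<Sum>j\<in>insert a J. scale ((c(a:=k)) j) (u j)) = scale (k) (u a) + (\<Sum>j\<in>J. scale (c j) (u j))"
      using insert.hyps by (simp add: sum.insert) (intro sum.cong, auto)
    also have "\<dots> = x" using c by (simp add: algebra_simps)
    finally show "x \<in> {\<Sum>j\<in>insert a J. scale (c j) (u j) | c. True}" by (auto intro!: exI[of _ "c(a:=k)"])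
  next
    fix x assume "x \<in> {\<Sum>j\<in>insert a J. scale (c j) (u j) | c. True}"
    then obtain c where xc: "x = (\<Sum>j\<in>insert a J. scale (c j) (u j))" by auto
    have "\<And>j. j \<in> insert a J \<Longrightarrow> scale (c j) (u j) \<in> span (u ` insert a J)"
      by (intro span_scale span_base) auto
    then show "x \<in> span (u ` insert a J)" unfolding xc by (rule span_sum)
  qed
qed

lemma my_in_span_image_family:
  assumes "finite J" "x \<in> span (u ` J)"
  obtains c where "x = (\<Sum>j\<in>J. scale (c j) (u j))"
  using my_span_image_family[OF assms(1), of u] assms(2) by auto


lemma my_imodD: "imod scale U J u \<Longrightarrow> (\<Sum>j\<in>J. scale (c j) (u j)) \<in> U \<Longrightarrow> j \<in> J \<Longrightarrow> c j = 0"
  unfolding imod_def by blast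

lemma my_imod_cong: "(\<And>j. j \<in> J \<Longrightarrow> u j = v j) \<Longrightarrow> imod scale U J u \<longleftrightarrow> imod scale U J v"
  unfolding imod_def by (simp cong: sum.cong)

lemma my_imod_subset:
  assumes "imod scale U J u" "J' \<subseteq> J" "finite J"
  shows "imod scale U J' u"
  unfolding imod_def
proof (intro allI impI ballI)
  fix c j assume h: "(\<Sum>j\<in>J'. scale (c j) (u j)) \<in> U" and j: "j \<in> J'"
  let ?c = "\<lambda>j. if j \<in> J' then c j else 0"
  have "(\<Sum>j\<in>J. scale (?c j) (u j)) = (\<Sum>j\<in>J'. scale (?c j) (u j))"
    using assms(2,3) by (intro sum.mono_neutral_right) auto
  also have "\<dots> = (\<Sum>j\<in>J'. scale (c j) (u j))" by (intro sum.cong) auto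
  finally have "?c j = 0" using assms(1) j assms(2) h by (intro my_imodD[of U J u ?c]) auto
  with j show "c j = 0" by simp
qed

lemma my_imod_0_imp:
  assumes "imod scale {0} J u" "finite J"
  shows "inj_on u J" "independent (u ` J)"
proof -
  show inj: "inj_on u J"
  proof (rule inj_onI, rule ccontr)
    fix a b assume ab: "a \<in> J" "b \<in> J" "u a = u b" "a \<noteq> b"
    let ?c = "\<lambda>j. if j = a then (1::'a) else if j = b then -1 else 0"
    have "(\<Sum>j\<in>J. scale (?c j) (u j)) = (\<Sum>j\<in>J. (if j = a then u a else 0) + (if j = b then - u b else 0))"
      using ab by (intro sum.cong) auto
    also have "\<dots> = 0" using ab assms(2) by (simp add: sum.distrib)
    finally have calc: "(\<Sum>j\<in>J. scale (?c j) (u j)) = 0" .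
    have H: "\<And>c. (\<Sum>j\<in>J. scale (c j) (u j)) = 0 \<Longrightarrow> \<forall>j\<in>J. c j = 0"
      using assms(1) unfolding imod_def by simp
    have "\<forall>j\<in>J. ?c j = 0" by (rule H[OF calc])
    then show False using ab by (metis one_neq_zero)
  qed
  show "independent (u ` J)"
  proof
    assume "dependent (u ` J)"
    then obtain w where w: "\<exists>v\<in>u ` J. w v \<noteq> 0" "(\<Sum>v\<in>u ` J. scale (w v) (v)) = 0"
      using dependent_finite[of "u ` J"] assms(2) by auto
    have "(\<Sum>j\<in>J. scale (w (u j)) (u j)) = 0" using w(2) sum.reindex[OF inj, of "\<lambda>v. scale (w v) (v)"] by simp
    then have "\<forall>j\<in>J. w (u j) = 0" using assms(1) unfolding imod_def by auto
    with w(1) show False by auto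
  qed
qed

lemma my_imod_0_intro:
  assumes "inj_on u J" "independent (u ` J)" "finite J"
  shows "imod scale {0} J u"
  unfolding imod_def
proof (intro allI impI ballI)
  fix c j assume h: "(\<Sum>j\<in>J. scale (c j) (u j)) \<in> {0}" and j: "j \<in> J"
  let ?w = "\<lambda>v. c (the_inv_into J u v)"
  have "(\<Sum>v\<in>u ` J. scale (?w v) (v)) = (\<Sum>j\<in>J. scale (c j) (u j))"
    using assms(1) by (simp add: sum.reindex the_inv_into_f_f)
  with h have "(\<Sum>v\<in>u ` J. scale (?w v) (v)) = 0" by simp
  then have "?w (u j) = 0" using assms(2,3) j dependent_finite[of "u ` J"] by auto
  then show "c j = 0" using assms(1) j by (simp add: the_inv_into_f_f)
qed

end

context vector_space begin

lemma my_level_dim: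
  fixes d l i :: nat and lam :: "nat \<Rightarrow> nat" and u :: "nat \<Rightarrow> 'b"
  assumes sub: "\<And>i. i \<le> l \<Longrightarrow> subspace (F i)"
  and mono: "\<And>i. i < l \<Longrightarrow> F i \<subseteq> F (Suc i)"
  and lev: "\<And>j. j < d \<Longrightarrow> 1 \<le> lam j \<and> lam j \<le> l \<and> u j \<in> F (lam j)"
  and ind: "\<And>m. 1 \<le> m \<Longrightarrow> m \<le> l \<Longrightarrow> imod scale (F (m-1)) {j. j < d \<and> lam j = m} u"
  and i: "i \<le> l"
  shows "dim (span (u ` {..<d}) \<inter> F i) = card {j. j < d \<and> lam j \<le> i}"
proof -
  have Fmono: "F i \<subseteq> F i'" if "i \<le> i'" "i' \<le> l" for i i'
    using that
  proof (induction i')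
    case 0 then show ?case by simp
  next
    case (Suc n) then show ?case using mono[of n] by (cases "i = Suc n") auto
  qed
  have core: "\<forall>j<d. i < lam j \<longrightarrow> c j = 0"
    if ci: "(\<Sum>j<d. scale (c j) (u j)) \<in> F i" and il: "i \<le> l" for c i
  proof -
    have "\<forall>j<d. l - k < lam j \<longrightarrow> c j = 0" if "k \<le> l - i" for k
      using that
    proof (induction k)
      case 0 then show ?case using lev by fastforce
    next
      case (Suc k)
      define m where "m = l - k"
      have m: "1 \<le> m" "m \<le> l" "i < m" "l - Suc k = m - 1" using Suc.prems unfolding m_def by auto
      have IH: "\<forall>j<d. m < lam j \<longrightarrow> c j = 0" using Suc unfolding m_def by auto
      let ?f = "\<lambda>j. scale (c j) (u j)"
      let ?A = "{j. j < d \<and> lam j < m}" and ?B = "{j. j < d \<and> lam j = m}"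
      have "(\<Sum>j<d. ?f j) = (\<Sum>j\<in>{j. j < d \<and> lam j \<le> m}. ?f j)"
        using IH by (intro sum.mono_neutral_right) auto
      also have "{j. j < d \<and> lam j \<le> m} = ?A \<union> ?B" by auto
      also have "sum ?f (?A \<union> ?B) = sum ?f ?A + sum ?f ?B"
        by (rule sum.union_disjoint) auto
      finally have "sum ?f ?B = (\<Sum>j<d. ?f j) - sum ?f ?A" by (simp add: algebra_simps)
      moreover have "(\<Sum>j<d. ?f j) \<in> F (m - 1)"
      proof -
        have "F i \<subseteq> F (m - 1)" using m by (intro Fmono) auto
        then show ?thesis using ci by auto
      qed
      moreover have "sum ?f ?A \<in> F (m - 1)"
      proof (rule subspace_sum)
        show "subspace (F (m - 1))" using sub m by auto
        fix j assume "j \<in> ?A"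
        then have j: "j < d" "lam j < m" by auto
        have "F (lam j) \<subseteq> F (m - 1)" using m j by (intro Fmono) auto
        then have "u j \<in> F (m - 1)" using lev[OF j(1)] by auto
        then show "?f j \<in> F (m - 1)" using sub m by (intro subspace_scale) auto
      qed
      ultimately have "sum ?f ?B \<in> F (m - 1)" using sub m by (auto intro: subspace_diff)
      then have "\<forall>j\<in>?B. c j = 0" using ind[OF m(1,2)] unfolding imod_def by blast
      then show ?case using IH m(4) by auto
    qed
    from this[of "l - i"] il show ?thesis by auto
  qed
  define S where "S = {j. j < d \<and> lam j \<le> i}"
  have fS: "finite S" unfolding S_def by auto
  have eq: "span (u ` {..<d}) \<inter> F i = span (u ` S)"
  proof
    show "span (u ` {..<d}) \<inter> F i \<subseteq> span (u ` S)"
    proof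
      fix x assume x: "x \<in> span (u ` {..<d}) \<inter> F i"
      then obtain c where xc: "x = (\<Sum>j<d. scale (c j) (u j))"
        using my_in_span_image_family[of "{..<d}" x u] by auto
      have "\<forall>j<d. i < lam j \<longrightarrow> c j = 0" using core[of c i] x xc i by auto
      then have "(\<Sum>j<d. scale (c j) (u j)) = (\<Sum>j\<in>S. scale (c j) (u j))" unfolding S_def
        by (intro sum.mono_neutral_right) (auto simp: not_le)
      then have "x = (\<Sum>j\<in>S. scale (c j) (u j))" using xc by simp
      then show "x \<in> span (u ` S)" using my_span_image_family[OF fS, of u] by auto
    qed
    show "span (u ` S) \<subseteq> span (u ` {..<d}) \<inter> F i"
    proof (rule Int_greatest)
      show "span (u ` S) \<subseteq> span (u ` {..<d})" by (rule span_mono) (auto simp: S_def)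
      show "span (u ` S) \<subseteq> F i"
      proof (rule span_minimal)
        show "u ` S \<subseteq> F i" using lev Fmono i by (force simp: S_def)
        show "subspace (F i)" using sub i by auto
      qed
    qed
  qed
  have ind0: "imod scale {0} {..<d} u"
    unfolding imod_def
  proof (intro allI impI ballI)
    fix c j assume "(\<Sum>j\<in>{..<d}. scale (c j) (u j)) \<in> {0}" "j \<in> {..<d}"
    moreover have "0 \<in> F 0" using sub[of 0] by (simp add: subspace_0)
    ultimately show "c j = 0" using core[of c 0] lev[of j] by auto
  qed
  have indS: "imod scale {0} S u" by (rule my_imod_subset[OF ind0]) (auto simp: S_def)
  have "dim (span (u ` S)) = card (u ` S)"
    using my_imod_0_imp(2)[OF indS fS] by (rule dim_span_eq_card_independent)
  also have "\<dots> = card S" using my_imod_0_imp(1)[OF indS fS] by (rule card_image)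
  finally show ?thesis using eq S_def by simp
qed

end

context finite_dimensional_vector_space begin

lemma my_extend_imod:
  assumes U: "subspace U" and W: "subspace W" and UW: "U \<subseteq> W" and fA: "finite A"
    and fJ: "finite J0" and disj: "A \<inter> J0 = {}"
    and ind: "imod scale U J0 \<rho>" and rW: "\<rho> ` J0 \<subseteq> W"
    and card: "card J0 + card A + dim U \<le> dim W"
  shows "\<exists>\<rho>'. (\<forall>j\<in>J0. \<rho>' j = \<rho> j) \<and> \<rho>' ` (J0 \<union> A) \<subseteq> W \<and> imod scale U (J0 \<union> A) \<rho>'"
  using fA disj card
proof (induction A rule: finite_induct)
  case empty then show ?case using ind rW by (intro exI[of _ \<rho>]) auto
next
  case (insert a A)
  from insert.prems insert.hyps have "A \<inter> J0 = {}" "card J0 + card A + dim U \<le> dim W" by auto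
  then obtain \<rho>1 where r1: "\<forall>j\<in>J0. \<rho>1 j = \<rho> j" "\<rho>1 ` (J0 \<union> A) \<subseteq> W" "imod scale U (J0 \<union> A) \<rho>1"
    using insert.IH by blast
  define T where "T = \<rho>1 ` (J0 \<union> A)"
  obtain E where E: "E \<subseteq> U" "independent E" "U \<subseteq> span E" "card E = dim U"
    using basis_exists[of U] by blast
  have fE: "finite E" using E(2) finiteI_independent by blast
  have fT: "finite T" using fJ insert.hyps unfolding T_def by auto
  have "span (U \<union> T) \<subseteq> span (E \<union> T)"
  proof (rule span_minimal)
    show "U \<union> T \<subseteq> span (E \<union> T)" using E(3) span_mono[of E "E \<union> T"] span_superset[of "E \<union> T"] by auto
  qed auto
  then have "dim (span (U \<union> T)) \<le> card (E \<union> T)" using fE fT by (intro dim_le_card) auto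
  also have "\<dots> \<le> card E + card T" by (rule card_Un_le)
  also have "card T \<le> card (J0 \<union> A)" unfolding T_def using fJ insert.hyps by (intro card_image_le) auto
  also have "card (J0 \<union> A) \<le> card J0 + card A" by (rule card_Un_le)
  finally have "dim (span (U \<union> T)) < dim W"
    using insert.prems insert.hyps E(4) by (simp add: card_insert_if)
  then have "\<not> W \<subseteq> span (U \<union> T)" using dim_subset[of W "span (U \<union> T)"] by auto
  then obtain w where w: "w \<in> W" "w \<notin> span (U \<union> T)" by auto
  have aJ: "a \<notin> J0 \<union> A" using insert.hyps insert.prems by auto
  define \<rho>' where "\<rho>' = \<rho>1(a := w)"
  have "imod scale U (J0 \<union> insert a A) \<rho>'"
    unfolding imod_def
  proof (intro allI impI)
    fix c assume h: "(\<Sum>j\<in>J0 \<union> insert a A. scale (c j) (\<rho>' j)) \<in> U"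
    have "(\<Sum>j\<in>J0 \<union> insert a A. scale (c j) (\<rho>' j)) = scale (c a) w + (\<Sum>j\<in>J0 \<union> A. scale (c j) (\<rho>1 j))"
    proof -
      have "J0 \<union> insert a A = insert a (J0 \<union> A)" by auto
      then have "(\<Sum>j\<in>J0 \<union> insert a A. scale (c j) (\<rho>' j)) = scale (c a) (\<rho>' a) + (\<Sum>j\<in>J0 \<union> A. scale (c j) (\<rho>' j))"
        using aJ fJ insert.hyps by (simp add: sum.insert)
      also have "(\<Sum>j\<in>J0 \<union> A. scale (c j) (\<rho>' j)) = (\<Sum>j\<in>J0 \<union> A. scale (c j) (\<rho>1 j))"
        using aJ unfolding \<rho>'_def by (intro sum.cong) auto
      finally show ?thesis unfolding \<rho>'_def by simp
    qed
    note eq = this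
    have ca: "c a = 0"
    proof (rule ccontr)
      assume ca: "c a \<noteq> 0"
      define s where "s = (\<Sum>j\<in>J0 \<union> insert a A. scale (c j) (\<rho>' j))"
      have s: "s \<in> span (U \<union> T)" using h span_superset unfolding s_def by blast
      have t: "(\<Sum>j\<in>J0 \<union> A. scale (c j) (\<rho>1 j)) \<in> span (U \<union> T)"
        by (intro span_sum span_scale span_base) (auto simp: T_def)
      have "w = scale (inverse (c a)) (s - (\<Sum>j\<in>J0 \<union> A. scale (c j) (\<rho>1 j)))"
        using eq ca unfolding s_def by (simp add: scale_right_diff_distrib)
      also have "\<dots> \<in> span (U \<union> T)" using s t by (intro span_scale span_diff)
      finally show False using w by simp
    qed
    with eq h have "(\<Sum>j\<in>J0 \<union> A. scale (c j) (\<rho>1 j)) \<in> U" by simp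
    then have "\<forall>j\<in>J0 \<union> A. c j = 0" using r1(3) unfolding imod_def by blast
    with ca show "\<forall>j\<in>J0 \<union> insert a A. c j = 0" by auto
  qed
  moreover have "\<forall>j\<in>J0. \<rho>' j = \<rho> j" using r1(1) aJ unfolding \<rho>'_def by auto
  moreover have "\<rho>' ` (J0 \<union> insert a A) \<subseteq> W" using r1(2) w aJ unfolding \<rho>'_def by auto
  ultimately show ?case by blast
qed

end

section \<open>Reduction, base change, saturation\<close>

lemma red_nth [simp]: "red v $ i = (v $ i) $ 0"
  by (simp add: red_def)
lemma red_add [simp]: "red (x + y) = red x + red y"
  by (simp add: vec_eq_iff)
lemma red_zero [simp]: "red 0 = 0"
  by (simp add: vec_eq_iff)
lemma red_diff [simp]: "red (x - y) = red x - red y"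
  by (simp add: vec_eq_iff)
lemma red_scale [simp]: "red (c *s x) = (c $ 0) *s red x"
  by (simp add: vec_eq_iff)
lemma red_sum: "red (\<Sum>j\<in>J. f j) = (\<Sum>j\<in>J. red (f j))"
  by (simp add: vec_eq_iff fps_sum_nth)

definition cl :: "'a::field ^ 'n \<Rightarrow> 'a fps ^ 'n" where
  "cl u = (\<chi> i. fps_const (u $ i))"
lemma red_cl [simp]: "red (cl u) = u"
  by (simp add: vec_eq_iff cl_def)

lemma ext_nth [simp]: "ext v $ i = fps_to_fls (v $ i)"
  by (simp add: ext_def)
lemma fps_to_fls_sum: "fps_to_fls (\<Sum>j\<in>J. f j) = (\<Sum>j\<in>J. fps_to_fls (f j))"
  by (induction J rule: infinite_finite_induct) auto
lemma ext_add [simp]: "ext (x + y) = ext x + ext y"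
  by (simp add: vec_eq_iff)
lemma ext_zero [simp]: "ext 0 = 0"
  by (simp add: vec_eq_iff)
lemma ext_scale [simp]: "ext (c *s x) = fps_to_fls c *s ext x"
  by (simp add: vec_eq_iff fls_times_fps_to_fls)
lemma ext_sum: "ext (\<Sum>j\<in>J. f j) = (\<Sum>j\<in>J. ext (f j))"
  by (simp add: vec_eq_iff fps_to_fls_sum)
lemma ext_inj: "ext x = ext y \<Longrightarrow> x = y"
  by (simp add: vec_eq_iff)

lemma fps_X_shift: "f $ 0 = 0 \<Longrightarrow> fps_X * fps_shift (Suc 0) f = (f :: 'a::field fps)"
  by (intro fps_ext) (auto simp: fps_X_mult_nth)

lemma red_zero_split:
  fixes y :: "'a::field fps ^ 'n"
  assumes "red y = 0"
  shows "y = fps_X *s (\<chi> i. fps_shift 1 (y $ i))"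
proof -
  have "\<And>i. (y $ i) $ 0 = 0" using assms by (simp add: vec_eq_iff)
  then show ?thesis by (simp add: vec_eq_iff fps_X_shift)
qed

definition satur :: "('a::field fps ^ 'n) set \<Rightarrow> bool" where
  "satur M \<longleftrightarrow> (\<forall>y. fps_X *s y \<in> M \<longrightarrow> y \<in> M)"

lemma fps_X_scale_eq_0: "fps_X *s (t :: 'a::field fps ^ 'n) = 0 \<Longrightarrow> t = 0"
  by (simp add: vec_eq_iff)

lemma direct_summand_satur:
  assumes "direct_summand (M :: ('a::field fps ^ 'n) set)"
  shows "satur M" "Rm.subspace M"
proof -
  obtain N where N: "Rm.subspace N" "M \<inter> N = {0}" "{x + y | x y. x \<in> M \<and> y \<in> N} = UNIV"
    and M: "Rm.subspace M"
    using assms unfolding direct_summand_def submoduleR_def scaleR_fps_eq by blast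
  show "Rm.subspace M" by (rule M)
  show "satur M" unfolding satur_def
  proof (intro allI impI)
    fix y :: "'a fps ^ 'n" assume y: "fps_X *s y \<in> M"
    have "y \<in> {x + y | x y. x \<in> M \<and> y \<in> N}" using N(3) by auto
    then obtain s t where st: "y = s + t" "s \<in> M" "t \<in> N" by auto
    have "fps_X *s t = fps_X *s y - fps_X *s s" using st by (simp add: algebra_simps)
    also have "\<dots> \<in> M" by (intro Rm.subspace_diff[OF M y] Rm.subspace_scale[OF M st(2)])
    finally have "fps_X *s t \<in> M \<inter> N" using N(1) st by (auto intro: Rm.subspace_scale)
    then have "t = 0" using N(2) fps_X_scale_eq_0 by auto
    then show "y \<in> M" using st by simp
  qed
qed

lemma satur_0: "satur ({0} :: ('a::field fps ^ 'n) set)"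
  unfolding satur_def using fps_X_scale_eq_0 by auto

lemma satur_pow: "satur M \<Longrightarrow> fps_X ^ N *s y \<in> M \<Longrightarrow> y \<in> M"
proof (induction N arbitrary: y)
  case 0 then show ?case by simp
next
  case (Suc N)
  have "fps_X ^ Suc N *s y = fps_X ^ N *s (fps_X *s y)" by (simp add: mult.commute)
  then have "fps_X *s y \<in> M" using Suc by auto
  then show ?case using Suc.prems(1) unfolding satur_def by auto
qed

lemma gen_zero:
  fixes M :: "('a::field fps ^ 'n) set" and u :: "'j \<Rightarrow> 'a fps ^ 'n"
  assumes M: "Rm.subspace M" "satur M" and fJ: "finite J"
    and H: "\<And>c. (\<Sum>j\<in>J. c j *s u j) \<in> M \<Longrightarrow> \<forall>j\<in>J. c j $ 0 = 0"
  shows "imod (*s) M J u"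
proof -
  have "\<forall>c. (\<Sum>j\<in>J. c j *s u j) \<in> M \<longrightarrow> (\<forall>j\<in>J. c j $ n = 0)" for n
  proof (induction n)
    case 0 then show ?case using H by blast
  next
    case (Suc n)
    show ?case
    proof (intro allI impI ballI)
      fix c j assume c: "(\<Sum>j\<in>J. c j *s u j) \<in> M" and j: "j \<in> J"
      define c' where "c' = (\<lambda>j. fps_shift (Suc 0) (c j))"
      have c0: "\<forall>j\<in>J. c j $ 0 = 0" using H c by blast
      have "(\<Sum>j\<in>J. c j *s u j) = (\<Sum>j\<in>J. fps_X *s (c' j *s u j))"
        using c0 unfolding c'_def by (intro sum.cong) (simp_all add: fps_X_shift)
      also have "\<dots> = fps_X *s (\<Sum>j\<in>J. c' j *s u j)" by (simp add: Rm.scale_sum_right)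
      finally have "(\<Sum>j\<in>J. c' j *s u j) \<in> M" using c M(2) unfolding satur_def by auto
      then have "c' j $ n = 0" using Suc j by blast
      then show "c j $ Suc n = 0" unfolding c'_def by simp
    qed
  qed
  then show ?thesis unfolding imod_def by (auto intro: fps_ext)
qed

lemma red_span: "red ` Rm.span S = vec.span (red ` (S :: ('a::field fps ^ 'n) set))"
proof
  have "Rm.span S \<subseteq> red -` vec.span (red ` S)"
  proof (rule Rm.span_minimal)
    show "S \<subseteq> red -` vec.span (red ` S)" by (auto intro: vec.span_base)
    show "Rm.subspace (red -` vec.span (red ` S))"
      unfolding Rm.subspace_def by (auto intro: vec.span_add vec.span_scale vec.span_zero)
  qed
  then show "red ` Rm.span S \<subseteq> vec.span (red ` S)" by auto
  show "vec.span (red ` S) \<subseteq> red ` Rm.span S"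
  proof (rule vec.span_minimal)
    show "red ` S \<subseteq> red ` Rm.span S" using Rm.span_superset by auto
    show "vec.subspace (red ` Rm.span S)"
      unfolding vec.subspace_def
    proof (intro conjI ballI allI)
      show "0 \<in> red ` Rm.span S" using Rm.span_zero by force
      fix x y assume "x \<in> red ` Rm.span S" "y \<in> red ` Rm.span S"
      then obtain x' y' where "x = red x'" "y = red y'" "x' \<in> Rm.span S" "y' \<in> Rm.span S" by auto
      then show "x + y \<in> red ` Rm.span S" by (intro image_eqI[of _ _ "x' + y'"]) (auto intro: Rm.span_add)
    next
      fix c x assume "x \<in> red ` Rm.span S"
      then obtain x' where "x = red x'" "x' \<in> Rm.span S" by auto
      then show "c *s x \<in> red ` Rm.span S"
        by (intro image_eqI[of _ _ "fps_const c *s x'"]) (auto intro: Rm.span_scale)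
    qed
  qed
qed

lemma red_subspace: "Rm.subspace M \<Longrightarrow> vec.subspace (red ` (M :: ('a::field fps ^ 'n) set))"
  using red_span[of M] Rm.span_eq_iff[of M] by (metis vec.subspace_span)

lemma red_free_dim:
  fixes M :: "('a::field fps ^ 'n) set"
  assumes ds: "direct_summand M" and fr: "free_of_rank M r"
  shows "vec.dim (red ` M) = r"
proof -
  obtain B where B: "finite B" "card B = r" "\<not> Rm.dependent B" "Rm.span B = M"
    using fr unfolding free_of_rank_def scaleR_fps_eq by blast
  note sM = direct_summand_satur[OF ds]
  have ind: "imod (*s) {0} B red"
    unfolding imod_def
  proof (intro allI impI)
    fix \<gamma> assume h: "(\<Sum>b\<in>B. \<gamma> b *s red b) \<in> {0}"
    define y where "y = (\<Sum>b\<in>B. fps_const (\<gamma> b) *s b)"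
    have "y \<in> Rm.span B" unfolding y_def
      by (intro Rm.span_sum Rm.span_scale Rm.span_base) auto
    then have yM: "y \<in> M" using B(4) by simp
    have "red y = 0" using h unfolding y_def by (simp add: red_sum)
    then have ysp: "y = fps_X *s (\<chi> i. fps_shift 1 (y $ i))" by (rule red_zero_split)
    then have "(\<chi> i. fps_shift 1 (y $ i)) \<in> M" using yM sM(1) unfolding satur_def by metis
    then obtain a where a: "(\<chi> i. fps_shift 1 (y $ i)) = (\<Sum>b\<in>B. a b *s b)"
      using B(1,4) Rm.span_finite[of B] by auto
    have "(\<Sum>b\<in>B. (fps_const (\<gamma> b) - fps_X * a b) *s b) = (\<Sum>b\<in>B. fps_const (\<gamma> b) *s b - fps_X *s (a b *s b))"
      by (intro sum.cong) (simp_all add: Rm.scale_left_diff_distrib)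
    also have "\<dots> = y - fps_X *s (\<Sum>b\<in>B. a b *s b)"
      unfolding y_def by (simp only: sum_subtractf Rm.scale_sum_right)
    also have "\<dots> = 0" using ysp a by simp
    finally have calc: "(\<Sum>b\<in>B. (fps_const (\<gamma> b) - fps_X * a b) *s b) = 0" .
    have indB: "imod (*s) {0} B (\<lambda>b. b)" using Rm.my_imod_0_intro[of "\<lambda>b. b" B] B(1,3) by simp
    have H: "\<And>c. (\<Sum>b\<in>B. c b *s b) = 0 \<Longrightarrow> \<forall>b\<in>B. c b = 0"
      using indB unfolding imod_def by simp
    have "\<forall>b\<in>B. fps_const (\<gamma> b) - fps_X * a b = 0" by (rule H[OF calc])
    then show "\<forall>b\<in>B. \<gamma> b = 0"
    proof (intro ballI)
      fix b assume "\<forall>b\<in>B. fps_const (\<gamma> b) - fps_X * a b = 0" "b \<in> B"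
      then have "(fps_const (\<gamma> b) - fps_X * a b) $ 0 = 0" by simp
      then show "\<gamma> b = 0" by simp
    qed
  qed
  have eq: "red ` M = vec.span (red ` B)" using B(4) red_span by blast
  have ib: "vec.independent (red ` B)" by (rule vec.my_imod_0_imp(2)[OF ind B(1)])
  have "vec.dim (red ` M) = vec.dim (vec.span (red ` B))" using eq by simp
  also have "\<dots> = card (red ` B)" by (rule vec.dim_span_eq_card_independent[OF ib])
  also have "\<dots> = r" using card_image[OF vec.my_imod_0_imp(1)[OF ind B(1)]] B(2) by simp
  finally show ?thesis .
qed

lemma clear_one: "\<exists>N0. \<forall>N\<ge>N0. \<exists>f. fls_X ^ N * (g :: 'a::field fls) = fps_to_fls f"
proof (intro exI[of _ "nat (- fls_subdegree g)"] allI impI)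
  fix N assume N: "N \<ge> nat (- fls_subdegree g)"
  then have "int N \<ge> - fls_subdegree g" by linarith
  then obtain f' where "g = fls_shift (int N) (fps_to_fls f')" by (rule fls_as_fps)
  then have "fls_X ^ N * g = fps_to_fls f'" by (simp add: fls_X_power_times_conv_shift)
  then show "\<exists>f. fls_X ^ N * g = fps_to_fls f" by blast
qed

lemma clear_fin:
  fixes r :: "'j \<Rightarrow> 'a::field fls"
  assumes "finite T"
  shows "\<exists>N0. \<forall>N\<ge>N0. \<forall>a\<in>T. \<exists>f. fls_X ^ N * r a = fps_to_fls f"
  using assms
proof (induction T rule: finite_induct)
  case empty then show ?case by auto
next
  case (insert x T)
  obtain N1 where N1: "\<forall>N\<ge>N1. \<forall>a\<in>T. \<exists>f. fls_X ^ N * r a = fps_to_fls f" using insert.IH by blast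
  obtain N2 where N2: "\<forall>N\<ge>N2. \<exists>f. fls_X ^ N * r x = fps_to_fls f" using clear_one by blast
  show ?case using N1 N2 by (intro exI[of _ "max N1 N2"]) auto
qed

lemma tensor_K_eq: "tensor_K M = vec.span (ext ` M)"
  by (simp add: tensor_K_def scale_K_eq)

lemma K_to_R:
  fixes M :: "('a::field fps ^ 'n) set"
  assumes M: "Rm.subspace M" "satur M" and y: "ext y \<in> tensor_K M"
  shows "y \<in> M"
proof -
  obtain t r where tr: "ext y = (\<Sum>a\<in>t. r a *s a)" "finite t" "t \<subseteq> ext ` M"
    using y unfolding tensor_K_eq vec.span_explicit by blast
  obtain N where N: "\<forall>a\<in>t. \<exists>f. fls_X ^ N * r a = fps_to_fls f" using clear_fin[OF tr(2), of r] by blast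
  obtain f where f: "\<forall>a\<in>t. fls_X ^ N * r a = fps_to_fls (f a)" using bchoice[OF N] by blast
  have ex: "\<forall>a\<in>t. \<exists>m. m \<in> M \<and> ext m = a" using tr(3) by blast
  obtain m where m: "\<forall>a\<in>t. m a \<in> M \<and> ext (m a) = a" using bchoice[OF ex] by blast
  have "ext (fps_X ^ N *s y) = fls_X ^ N *s ext y" by (simp only: ext_scale fps_to_fls_power fps_X_to_fls)
  also have "\<dots> = (\<Sum>a\<in>t. (fls_X ^ N * r a) *s a)" unfolding tr(1) by (simp only: vec.scale_sum_right vec.scale_scale)
  also have "\<dots> = (\<Sum>a\<in>t. fps_to_fls (f a) *s ext (m a))" using f m by (intro sum.cong) auto
  also have "\<dots> = ext (\<Sum>a\<in>t. f a *s m a)" by (simp add: ext_sum)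
  finally have "fps_X ^ N *s y = (\<Sum>a\<in>t. f a *s m a)" by (rule ext_inj)
  also have "\<dots> \<in> M" using m M(1) by (intro Rm.subspace_sum Rm.subspace_scale) auto
  finally show ?thesis using satur_pow[OF M(2)] by blast
qed

lemma K_indep:
  fixes M :: "('a::field fps ^ 'n) set" and u :: "'j \<Rightarrow> 'a fps ^ 'n"
  assumes M: "Rm.subspace M" "satur M" and fJ: "finite J" and ind: "imod (*s) M J u"
  shows "imod (*s) (tensor_K M) J (\<lambda>j. ext (u j))"
  unfolding imod_def
proof (intro allI impI ballI)
  fix c j assume h: "(\<Sum>j\<in>J. c j *s ext (u j)) \<in> tensor_K M" and j: "j \<in> J"
  obtain N where N: "\<forall>a\<in>J. \<exists>f. fls_X ^ N * c a = fps_to_fls f" using clear_fin[OF fJ, of c] by blast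
  obtain f where f: "\<forall>a\<in>J. fls_X ^ N * c a = fps_to_fls (f a)" using bchoice[OF N] by blast
  have "ext (\<Sum>a\<in>J. f a *s u a) = (\<Sum>a\<in>J. fps_to_fls (f a) *s ext (u a))" by (simp add: ext_sum)
  also have "\<dots> = (\<Sum>a\<in>J. (fls_X ^ N * c a) *s ext (u a))" using f by (intro sum.cong) auto
  also have "\<dots> = fls_X ^ N *s (\<Sum>a\<in>J. c a *s ext (u a))" by (simp only: vec.scale_sum_right vec.scale_scale)
  also have "\<dots> \<in> tensor_K M" using h unfolding tensor_K_eq by (rule vec.span_scale)
  finally have "(\<Sum>a\<in>J. f a *s u a) \<in> M" by (rule K_to_R[OF M])
  then have "f j = 0" using ind j unfolding imod_def by blast
  then have "fls_X ^ N * c j = 0" using f j by simp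
  then show "c j = 0" by simp
qed

lemma det_hom:
  fixes f :: "'a::comm_ring_1 \<Rightarrow> 'b::comm_ring_1"
  assumes add: "\<And>x y. f (x + y) = f x + f y" and mult: "\<And>x y. f (x * y) = f x * f y"
    and one: "f 1 = 1" and neg: "\<And>x. f (- x) = - f x"
  shows "det (\<chi> i j. f (A$i$j)) = f (det (A::'a^'n^'n))"
proof -
  interpret F: additive f by unfold_locales (rule add)
  have prod: "f (prod g S) = prod (\<lambda>i. f (g i)) S" for g :: "'n \<Rightarrow> 'a" and S :: "'n set"
    by (induction S rule: infinite_finite_induct) (auto simp: one mult)
  have sgn: "f (of_int (sign p)) = of_int (sign p)" for p :: "'n \<Rightarrow> 'n"
    by (simp add: sign_def one neg)
  show ?thesis unfolding det_def by (simp add: F.sum mult prod sgn)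
qed

lemma det_red: "det (\<chi> i j. (A$i$j) $ 0) = (det (A::'a::field fps^'n^'n)) $ 0"
  by (rule det_hom) auto

lemma det_ext: "det (\<chi> i j. fps_to_fls (A$i$j)) = fps_to_fls (det (A::'a::field fps^'n^'n))"
  by (rule det_hom) (auto simp: fls_times_fps_to_fls)

lemma nak:
  fixes Z :: "('a::field fps ^ 'n) set"
  assumes fZ: "finite Z" and cZ: "card Z = CARD('n)" and ind: "imod (*s) {0} Z red"
  shows "Rm.span Z = UNIV"
proof -
  obtain e where e: "bij_betw e (UNIV :: 'n set) Z"
    using finite_same_card_bij[of "UNIV::'n set" Z] fZ cZ by auto
  define A :: "'a fps ^'n^'n" where "A = (\<chi> i j. e j $ i)"
  define Ab :: "'a ^'n^'n" where "Ab = (\<chi> i j. (A $ i $ j) $ 0)"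
  define AK :: "'a fls ^'n^'n" where "AK = (\<chi> i j. fps_to_fls (A $ i $ j))"
  have injAb: "inj ((*v) Ab)"
  proof (rule injI)
    fix x y assume "Ab *v x = Ab *v y"
    then have w0: "Ab *v (x - y) = 0" by (simp add: matrix_vector_mult_diff_distrib)
    define w where "w = x - y"
    have "Ab *v w = (\<Sum>j\<in>UNIV. w $ j *s red (e j))"
      by (simp add: vec_eq_iff matrix_vector_mult_def Ab_def A_def mult.commute)
    also have "\<dots> = (\<Sum>z\<in>Z. w $ (inv_into UNIV e z) *s red z)"
    proof -
      have "(\<Sum>j\<in>UNIV. w $ j *s red (e j)) = (\<Sum>j\<in>UNIV. w $ (inv_into UNIV e (e j)) *s red (e j))"
        using bij_betw_imp_inj_on[OF e] by (intro sum.cong) (auto simp: inv_into_f_f)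
      also have "\<dots> = (\<Sum>z\<in>Z. w $ (inv_into UNIV e z) *s red z)"
        by (rule sum.reindex_bij_betw[OF e])
      finally show ?thesis .
    qed
    finally have calc: "(\<Sum>z\<in>Z. w $ (inv_into UNIV e z) *s red z) = 0" using w0 w_def by simp
    have H: "\<And>c. (\<Sum>z\<in>Z. c z *s red z) = 0 \<Longrightarrow> \<forall>z\<in>Z. c z = 0"
      using ind unfolding imod_def by simp
    have all: "\<forall>z\<in>Z. w $ (inv_into UNIV e z) = 0" by (rule H[OF calc])
    have "w = 0"
    proof (subst vec_eq_iff, intro allI)
      fix j
      have "e j \<in> Z" using e bij_betwE by blast
      then have "w $ (inv_into UNIV e (e j)) = 0" using all by blast
      then show "w $ j = 0 $ j" using bij_betw_imp_inj_on[OF e] by (simp add: inv_into_f_f)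
    qed
    then show "x = y" unfolding w_def by simp
  qed
  have "det Ab \<noteq> 0"
    using det_nz_iff_inj_gen[OF matrix_vector_mul_linear_gen[of Ab]] injAb
    by (simp add: matrix_of_matrix_vector_mul[unfolded eta_contract_eq])
  then have dA0: "(det A) $ 0 \<noteq> 0" using det_red[of A] unfolding Ab_def by simp
  have dAK: "det AK = fps_to_fls (det A)" unfolding AK_def by (rule det_ext)
  have dAK0: "det AK \<noteq> 0" using dA0 dAK by auto
  have inv: "fps_to_fls (inverse (det A)) * fps_to_fls (det A) = 1"
    using inverse_mult_eq_1[OF dA0] by (simp flip: fls_times_fps_to_fls)
  show ?thesis
  proof (rule set_eqI, rule iffI)
    fix x :: "'a fps ^ 'n"
    define D where "D k = det (\<chi> i j. if j = k then x $ i else A $ i $ j)" for k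
    define y where "y = (\<chi> k. D k * inverse (det A))"
    have Dk: "det (\<chi> i j. if j = k then ext x $ i else AK $ i $ j) = fps_to_fls (D k)" for k
    proof -
      have eqm: "(\<chi> i j. if j = k then ext x $ i else AK $ i $ j) =
            (\<chi> i j. fps_to_fls ((\<chi> i j. if j = k then x $ i else A $ i $ j) $ i $ j))"
        by (simp add: vec_eq_iff AK_def)
      show ?thesis unfolding D_def eqm by (rule det_ext)
    qed
    have "ext y = (\<chi> k. det (\<chi> i j. if j = k then ext x $ i else AK $ i $ j) / det AK)"
    proof (subst vec_eq_iff, intro allI)
      fix k
      have "ext y $ k = fps_to_fls (D k) * fps_to_fls (inverse (det A))"
        by (simp add: y_def fls_times_fps_to_fls)
      also have "\<dots> = fps_to_fls (D k) / det AK"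
        using inv dAK0 dAK by (simp add: field_simps)
      finally show "ext y $ k = (\<chi> k. det (\<chi> i j. if j = k then ext x $ i else AK $ i $ j) / det AK) $ k"
        using Dk by simp
    qed
    then have c1: "AK *v ext y = ext x" by (subst cramer[OF dAK0])
    have c2: "ext (A *v y) = AK *v ext y"
      by (simp add: vec_eq_iff matrix_vector_mult_def AK_def fps_to_fls_sum fls_times_fps_to_fls)
    have "ext (A *v y) = ext x" using c1 c2 by simp
    then have Ay: "A *v y = x" by (rule ext_inj)
    have "A *v y = (\<Sum>j\<in>UNIV. y $ j *s e j)"
      by (simp add: vec_eq_iff matrix_vector_mult_def A_def mult.commute)
    also have "\<dots> \<in> Rm.span Z"
    proof (rule Rm.span_sum)
      fix j :: 'n
      have "e j \<in> Z" using e bij_betwE by blast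
      then show "y $ j *s e j \<in> Rm.span Z" by (intro Rm.span_scale Rm.span_base)
    qed
    finally show "x \<in> Rm.span Z" using Ay by simp
  qed simp
qed

lemma chain_mono:
  fixes V :: "nat \<Rightarrow> 'b set"
  assumes mono: "\<And>i. i < l \<Longrightarrow> V i \<subseteq> V (Suc i)"
  shows "i \<le> i' \<Longrightarrow> i' \<le> l \<Longrightarrow> V i \<subseteq> V i'"
proof (induction i')
  case 0 then show ?case by simp
next
  case (Suc n) then show ?case using mono[of n] by (cases "i = Suc n") auto
qed

lemma flag_basis:
  fixes V :: "nat \<Rightarrow> ('a::field ^ 'n) set" and l :: nat
  assumes sub: "\<And>i. i \<le> l \<Longrightarrow> vec.subspace (V i)"
    and mono: "\<And>i. i < l \<Longrightarrow> V i \<subseteq> V (Suc i)" and V0: "V 0 = {0}"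
  shows "\<exists>lb. imod (*s) {0} {..<vec.dim (V l)} lb \<and> (\<forall>i\<le>l. vec.span (lb ` {..<vec.dim (V i)}) = V i)"
proof -
  define D where "D i = vec.dim (V i)" for i
  have Dmono: "D i' \<le> D i" if "i' \<le> i" "i \<le> l" for i i'
    unfolding D_def using chain_mono[of l V, OF mono that] by (rule vec.dim_subset)
  have "i \<le> l \<longrightarrow> (\<exists>lb. imod (*s) {0} {..<D i} lb \<and> (\<forall>i'\<le>i. vec.span (lb ` {..<D i'}) = V i'))" for i
  proof (induction i)
    case 0
    have "D 0 = 0" unfolding D_def V0 by simp
    then show ?case using V0 by (intro impI exI[of _ "\<lambda>_. 0"]) (auto simp: imod_def)
  next
    case (Suc i)
    show ?case
    proof
      assume il: "Suc i \<le> l"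
      then obtain lb where l1: "imod (*s) {0} {..<D i} lb" "\<forall>i'\<le>i. vec.span (lb ` {..<D i'}) = V i'"
        using Suc.IH by auto
      define S where "S = lb ` {..<D i}"
      have injS: "inj_on lb {..<D i}" and indS: "vec.independent S"
        using vec.my_imod_0_imp[OF l1(1)] unfolding S_def by auto
      have spS: "vec.span S = V i" using l1(2) unfolding S_def by auto
      have "S \<subseteq> V (Suc i)" using spS vec.span_superset[of S] mono[of i] il by auto
      then obtain B where B: "S \<subseteq> B" "B \<subseteq> V (Suc i)" "vec.independent B" "V (Suc i) \<subseteq> vec.span B"
        using vec.maximal_independent_subset_extend[OF _ indS] by metis
      have fB: "finite B" using B(3) vec.finiteI_independent by blast
      have spB: "vec.span B = V (Suc i)"
        using B(2,4) vec.span_minimal[OF B(2) sub[OF il]] by auto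
      have cB: "card B = D (Suc i)" unfolding D_def by (rule vec.basis_card_eq_dim[OF B(2,4,3)])
      have cS: "card S = D i" unfolding S_def using card_image[OF injS] by simp
      have DD: "D i \<le> D (Suc i)" using Dmono il by auto
      have "card (B - S) = D (Suc i) - D i" using card_Diff_subset[OF _ B(1)] fB B(1) cB cS
        by (metis finite_subset)
      then have "card {D i..<D (Suc i)} = card (B - S)" by simp
      then obtain g where g: "bij_betw g {D i..<D (Suc i)} (B - S)"
        using finite_same_card_bij[of "{D i..<D (Suc i)}" "B - S"] fB by auto
      define lb' where "lb' j = (if j < D i then lb j else g j)" for j
      have img: "lb' ` {..<D (Suc i)} = B"
      proof -
        have "{..<D (Suc i)} = {..<D i} \<union> {D i..<D (Suc i)}" using DD by auto
        then have "lb' ` {..<D (Suc i)} = lb' ` {..<D i} \<union> lb' ` {D i..<D (Suc i)}" by auto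
        also have "lb' ` {..<D i} = S" unfolding S_def lb'_def by auto
        also have "lb' ` {D i..<D (Suc i)} = g ` {D i..<D (Suc i)}" unfolding lb'_def by auto
        also have "\<dots> = B - S" using g by (simp add: bij_betw_def)
        finally show ?thesis using B(1) by auto
      qed
      have inj': "inj_on lb' {..<D (Suc i)}"
        by (rule eq_card_imp_inj_on) (use img cB in auto)
      have imod': "imod (*s) {0} {..<D (Suc i)} lb'"
        by (rule vec.my_imod_0_intro[OF inj']) (use img B(3) in auto)
      have "\<forall>i'\<le>Suc i. vec.span (lb' ` {..<D i'}) = V i'"
      proof (intro allI impI)
        fix i' assume i': "i' \<le> Suc i"
        show "vec.span (lb' ` {..<D i'}) = V i'"
        proof (cases "i' = Suc i")
          case True then show ?thesis using img spB by simp
        next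
          case False
          then have "i' \<le> i" using i' by auto
          then have "D i' \<le> D i" using Dmono il by auto
          then have "lb' ` {..<D i'} = lb ` {..<D i'}" unfolding lb'_def by auto
          then show ?thesis using l1(2) \<open>i' \<le> i\<close> by simp
        qed
      qed
      then show "\<exists>lb. imod (*s) {0} {..<D (Suc i)} lb \<and> (\<forall>i'\<le>Suc i. vec.span (lb ` {..<D i'}) = V i')"
        using imod' by blast
    qed
  qed
  then show ?thesis unfolding D_def by auto
qed

lemma ext_span: "vec.span (ext ` Rm.span S) = vec.span (ext ` (S :: ('a::field fps ^ 'n) set))"
proof
  have "Rm.span S \<subseteq> ext -` vec.span (ext ` S)"
  proof (rule Rm.span_minimal)
    show "S \<subseteq> ext -` vec.span (ext ` S)" by (auto intro: vec.span_base)
    show "Rm.subspace (ext -` vec.span (ext ` S))"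
      unfolding Rm.subspace_def by (auto intro: vec.span_add vec.span_scale vec.span_zero)
  qed
  then have "ext ` Rm.span S \<subseteq> vec.span (ext ` S)" by auto
  then show "vec.span (ext ` Rm.span S) \<subseteq> vec.span (ext ` S)"
    by (rule vec.span_minimal) auto
  show "vec.span (ext ` S) \<subseteq> vec.span (ext ` Rm.span S)"
    using Rm.span_superset by (intro vec.span_mono) auto
qed

lemma natind:
  fixes lb :: "nat \<Rightarrow> 'a::field ^ 'n"
  assumes ind: "imod (*s) {0} {..<d} lb" and U: "vec.subspace U" and Lb: "vec.subspace Lbar"
    and sp: "vec.span (lb ` {..<D1}) = Lbar \<inter> U" and D: "D1 \<le> D2" "D2 \<le> d"
    and inL: "lb ` {..<D2} \<subseteq> Lbar"
  shows "imod (*s) U {j. D1 \<le> j \<and> j < D2} lb"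
  unfolding imod_def
proof (intro allI impI ballI)
  fix \<gamma> j assume h: "(\<Sum>j\<in>{j. D1 \<le> j \<and> j < D2}. \<gamma> j *s lb j) \<in> U" and j: "j \<in> {j. D1 \<le> j \<and> j < D2}"
  let ?B = "{j. D1 \<le> j \<and> j < D2}"
  have "(\<Sum>j\<in>?B. \<gamma> j *s lb j) \<in> Lbar"
    using inL by (intro vec.subspace_sum[OF Lb] vec.subspace_scale[OF Lb]) auto
  with h have "(\<Sum>j\<in>?B. \<gamma> j *s lb j) \<in> vec.span (lb ` {..<D1})" using sp by auto
  then obtain c where c: "(\<Sum>j\<in>?B. \<gamma> j *s lb j) = (\<Sum>j<D1. c j *s lb j)"
    using vec.my_in_span_image_family[of "{..<D1}"] by blast
  define \<delta> where "\<delta> j = (if j < D1 then - c j else if j < D2 then \<gamma> j else 0)" for j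
  have "(\<Sum>j<d. \<delta> j *s lb j) = (\<Sum>j\<in>{..<D1} \<union> ?B. \<delta> j *s lb j)"
    using D by (intro sum.mono_neutral_right) (auto simp: \<delta>_def)
  also have "\<dots> = (\<Sum>j<D1. \<delta> j *s lb j) + (\<Sum>j\<in>?B. \<delta> j *s lb j)"
    by (rule sum.union_disjoint) auto
  also have "(\<Sum>j<D1. \<delta> j *s lb j) = - (\<Sum>j<D1. c j *s lb j)"
    by (simp add: \<delta>_def sum_negf)
  also have "(\<Sum>j\<in>?B. \<delta> j *s lb j) = (\<Sum>j\<in>?B. \<gamma> j *s lb j)"
    by (intro sum.cong) (auto simp: \<delta>_def)
  finally have "(\<Sum>j<d. \<delta> j *s lb j) = 0" using c by simp
  then have "\<delta> j = 0" using ind j D unfolding imod_def by auto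
  then show "\<gamma> j = 0" using j by (simp add: \<delta>_def)
qed

lemma Rclaim:
  fixes M :: "('a::field fps ^ 'n) set" and v g w :: "'j \<Rightarrow> 'a fps ^ 'n" and rho :: "'j \<Rightarrow> 'a ^ 'n"
  assumes M: "Rm.subspace M" "satur M" and fJ: "finite J" and NJ: "Nt \<subseteq> J"
    and v: "\<And>j. j \<in> J \<Longrightarrow> v j = g j + fps_X *s w j"
    and nat: "\<And>j. j \<in> Nt \<Longrightarrow> w j = 0 \<and> red (g j) = rho j"
    and push: "\<And>j. j \<in> J \<Longrightarrow> j \<notin> Nt \<Longrightarrow> g j \<in> M \<and> red (w j) = rho j"
    and ind: "imod (*s) (red ` M) J rho"
  shows "imod (*s) M J v"
proof (rule gen_zero[OF M fJ])
  fix c assume h: "(\<Sum>j\<in>J. c j *s v j) \<in> M"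
  have Mb: "vec.subspace (red ` M)" by (rule red_subspace[OF M(1)])
  define \<gamma> where "\<gamma> j = (if j \<in> Nt then c j $ 0 else 0)" for j
  have "red (\<Sum>j\<in>J. c j *s v j) = (\<Sum>j\<in>J. \<gamma> j *s rho j + (if j \<in> Nt then 0 else c j $ 0 *s red (g j)))"
    unfolding red_sum using nat NJ by (intro sum.cong) (auto simp: v \<gamma>_def)
  also have "\<dots> = (\<Sum>j\<in>J. \<gamma> j *s rho j) + (\<Sum>j\<in>J. (if j \<in> Nt then 0 else c j $ 0 *s red (g j)))"
    by (rule sum.distrib)
  finally have e1: "(\<Sum>j\<in>J. \<gamma> j *s rho j) = red (\<Sum>j\<in>J. c j *s v j) - (\<Sum>j\<in>J. (if j \<in> Nt then 0 else c j $ 0 *s red (g j)))"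
    by (simp add: algebra_simps)
  have "(\<Sum>j\<in>J. (if j \<in> Nt then 0 else c j $ 0 *s red (g j))) \<in> red ` M"
    using push by (intro vec.subspace_sum[OF Mb]) (auto intro: vec.subspace_scale[OF Mb] vec.subspace_0[OF Mb])
  moreover have "red (\<Sum>j\<in>J. c j *s v j) \<in> red ` M" using h by auto
  ultimately have "(\<Sum>j\<in>J. \<gamma> j *s rho j) \<in> red ` M" unfolding e1 by (rule vec.subspace_diff[OF Mb, rotated])
  then have \<gamma>0: "\<forall>j\<in>J. \<gamma> j = 0" using ind unfolding imod_def by blast
  then have cn: "\<And>j. j \<in> Nt \<Longrightarrow> c j $ 0 = 0" using NJ unfolding \<gamma>_def by force
  define q where "q j = (if j \<in> Nt then fps_shift (Suc 0) (c j) else c j)" for j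
  define rR where "rR j = (if j \<in> Nt then g j else w j)" for j
  have trm: "c j *s v j = (if j \<in> Nt then 0 else q j *s g j) + fps_X *s (q j *s rR j)" if j: "j \<in> J" for j
  proof (cases "j \<in> Nt")
    case True
    then have "c j = fps_X * q j" using cn[OF True] fps_X_shift[of "c j"] unfolding q_def by simp
    then show ?thesis using True nat[OF True] v[OF j] unfolding rR_def by (simp add: vector_smult_assoc)
  next
    case False
    then show ?thesis using v[OF j] unfolding rR_def q_def
      by (simp add: vector_add_ldistrib vector_smult_assoc mult.commute)
  qed
  have "(\<Sum>j\<in>J. c j *s v j) = (\<Sum>j\<in>J. (if j \<in> Nt then 0 else q j *s g j) + fps_X *s (q j *s rR j))"
    by (rule sum.cong[OF refl trm])
  also have "\<dots> = (\<Sum>j\<in>J. (if j \<in> Nt then 0 else q j *s g j)) + fps_X *s (\<Sum>j\<in>J. q j *s rR j)"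
    by (simp only: sum.distrib Rm.scale_sum_right)
  finally have s: "(\<Sum>j\<in>J. c j *s v j) = (\<Sum>j\<in>J. (if j \<in> Nt then 0 else q j *s g j)) + fps_X *s (\<Sum>j\<in>J. q j *s rR j)" .
  have inM: "(\<Sum>j\<in>J. (if j \<in> Nt then 0 else q j *s g j)) \<in> M"
    using push by (intro Rm.subspace_sum[OF M(1)]) (auto intro: Rm.subspace_scale[OF M(1)] Rm.subspace_0[OF M(1)])
  have "fps_X *s (\<Sum>j\<in>J. q j *s rR j) = (\<Sum>j\<in>J. c j *s v j) - (\<Sum>j\<in>J. (if j \<in> Nt then 0 else q j *s g j))"
    unfolding s by simp
  also have "\<dots> \<in> M" by (rule Rm.subspace_diff[OF M(1) h inM])
  finally have "fps_X *s (\<Sum>j\<in>J. q j *s rR j) \<in> M" .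
  then have "(\<Sum>j\<in>J. q j *s rR j) \<in> M" using M(2) unfolding satur_def by blast
  then have "red (\<Sum>j\<in>J. q j *s rR j) \<in> red ` M" by auto
  moreover have "red (\<Sum>j\<in>J. q j *s rR j) = (\<Sum>j\<in>J. (q j $ 0) *s rho j)"
    unfolding red_sum using nat push by (intro sum.cong) (auto simp: rR_def)
  ultimately have inMb: "(\<Sum>j\<in>J. (q j $ 0) *s rho j) \<in> red ` M" by simp
  have H: "\<And>c. (\<Sum>j\<in>J. c j *s rho j) \<in> red ` M \<Longrightarrow> \<forall>j\<in>J. c j = 0"
    using ind unfolding imod_def by blast
  have "\<forall>j\<in>J. q j $ 0 = 0" by (rule H[OF inMb])
  then show "\<forall>j\<in>J. c j $ 0 = 0"
  proof (intro ballI)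
    fix j assume q0: "\<forall>j\<in>J. q j $ 0 = 0" and j: "j \<in> J"
    show "c j $ 0 = 0"
    proof (cases "j \<in> Nt")
      case True then show ?thesis using cn by blast
    next
      case False then show ?thesis using q0 j unfolding q_def by auto
    qed
  qed
qed

lemma ds_span:
  fixes v :: "nat \<Rightarrow> 'a::field fps ^ 'n"
  assumes ind: "imod (*s) {0} {..<d} (\<lambda>j. red (v j))"
  shows "direct_summand (Rm.span (v ` {..<d}))"
proof -
  let ?lb = "\<lambda>j. red (v j)"
  have injl: "inj_on ?lb {..<d}" and indl: "vec.independent (?lb ` {..<d})"
    using vec.my_imod_0_imp[OF ind] by auto
  obtain B where B: "?lb ` {..<d} \<subseteq> B" "B \<subseteq> UNIV" "vec.independent B" "UNIV \<subseteq> vec.span B"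
    by (rule vec.maximal_independent_subset_extend[OF subset_UNIV indl])
  have fB: "finite B" using B(3) vec.finiteI_independent by blast
  have cB: "card B = CARD('n)"
    using vec.basis_card_eq_dim[OF B(2,4,3)] vec_dim_card by simp
  define T where "T = B - ?lb ` {..<d}"
  define Z1 where "Z1 = v ` {..<d}"
  define Z2 where "Z2 = cl ` T"
  define Z where "Z = Z1 \<union> Z2"
  have rZ1: "red ` Z1 = ?lb ` {..<d}" unfolding Z1_def by auto
  have rZ2: "red ` Z2 = T" unfolding Z2_def by (auto simp: image_image)
  have i1: "inj_on red Z1" unfolding Z1_def by (rule inj_on_imageI) (use injl in \<open>simp add: comp_def\<close>)
  have i2: "inj_on red Z2" unfolding Z2_def by (rule inj_on_imageI) (auto simp: comp_def inj_on_def)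
  have disj: "red ` Z1 \<inter> red ` Z2 = {}" using rZ1 rZ2 T_def by auto
  have Z12: "Z1 \<inter> Z2 = {}" using disj by auto
  have iZ: "inj_on red Z" unfolding Z_def inj_on_Un using i1 i2 disj by auto
  have "red ` Z = red ` Z1 \<union> red ` Z2" unfolding Z_def by (rule image_Un)
  also have "\<dots> = B" unfolding rZ1 rZ2 T_def using B(1) by blast
  finally have rZ: "red ` Z = B" .
  have fZ: "finite Z" using fB rZ iZ finite_image_iff by metis
  have cZ: "card Z = CARD('n)" using card_image[OF iZ] rZ cB by simp
  have indZ: "imod (*s) {0} Z red" using vec.my_imod_0_intro[OF iZ] rZ B(3) fZ by simp
  have spanZ: "Rm.span Z = UNIV" by (rule nak[OF fZ cZ indZ])
  have HZ: "\<And>c. (\<Sum>z\<in>Z. c z *s red z) = 0 \<Longrightarrow> \<forall>z\<in>Z. c z = 0"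
    using indZ unfolding imod_def by simp
  have RindZ: "imod (*s) {0} Z (\<lambda>z. z)"
  proof (rule gen_zero[OF Rm.subspace_single_0 satur_0 fZ])
    fix c assume "(\<Sum>z\<in>Z. c z *s z) \<in> {0}"
    then have "red (\<Sum>z\<in>Z. c z *s z) = 0" by simp
    then have "(\<Sum>z\<in>Z. (c z $ 0) *s red z) = 0" by (simp add: red_sum)
    then show "\<forall>z\<in>Z. c z $ 0 = 0" by (rule HZ)
  qed
  have HR: "\<And>c. (\<Sum>z\<in>Z. c z *s z) = 0 \<Longrightarrow> \<forall>z\<in>Z. c z = 0"
    using RindZ unfolding imod_def by simp
  define L where "L = Rm.span Z1"
  define N where "N = Rm.span Z2"
  have fZ1: "finite Z1" and fZ2: "finite Z2" using fZ unfolding Z_def by auto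
  have LN: "L \<inter> N = {0}"
  proof (intro set_eqI iffI)
    fix x assume x: "x \<in> L \<inter> N"
    obtain a where a: "x = (\<Sum>z\<in>Z1. a z *s z)" using x Rm.span_finite[OF fZ1] unfolding L_def by auto
    obtain b where b: "x = (\<Sum>z\<in>Z2. b z *s z)" using x Rm.span_finite[OF fZ2] unfolding N_def by auto
    define c where "c z = (if z \<in> Z1 then a z else - b z)" for z
    have "(\<Sum>z\<in>Z. c z *s z) = (\<Sum>z\<in>Z1. c z *s z) + (\<Sum>z\<in>Z2. c z *s z)"
      unfolding Z_def by (rule sum.union_disjoint[OF fZ1 fZ2 Z12])
    also have "(\<Sum>z\<in>Z1. c z *s z) = x" unfolding a c_def by (intro sum.cong) auto
    also have "(\<Sum>z\<in>Z2. c z *s z) = (\<Sum>z\<in>Z2. - (b z *s z))"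
    proof (rule sum.cong[OF refl])
      fix z assume "z \<in> Z2"
      then have "z \<notin> Z1" using Z12 by auto
      then show "c z *s z = - (b z *s z)" unfolding c_def by (simp add: Rm.scale_minus_left)
    qed
    also have "\<dots> = - x" unfolding b by (simp add: sum_negf)
    finally have "\<forall>z\<in>Z. c z = 0" using HR by simp
    then have az: "\<forall>z\<in>Z1. a z = 0" unfolding c_def Z_def by (metis UnI1)
    have "x = (\<Sum>z\<in>Z1. 0 *s z)" unfolding a using az by (intro sum.cong) auto
    then show "x \<in> {0}" by simp
  next
    fix x assume "x \<in> ({0} :: ('a fps ^ 'n) set)"
    then show "x \<in> L \<inter> N" unfolding L_def N_def by (auto intro: Rm.span_zero)
  qed
  have sum: "{x + y | x y. x \<in> L \<and> y \<in> N} = UNIV"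
    using Rm.span_Un[of Z1 Z2] spanZ unfolding L_def N_def Z_def by simp
  show ?thesis
    unfolding direct_summand_def submoduleR_def scaleR_fps_eq
    using LN sum unfolding L_def N_def Z1_def by blast
qed

theorem mainTheorem10:
  fixes Ms :: "nat \<Rightarrow> ('a::field fps ^ 'n) set"
    and h :: "nat \<Rightarrow> nat" and l :: nat
    and Lbar :: "('a ^ 'n) set"
    and d' :: "nat \<Rightarrow> int"
  assumes "Ms 0 = {0}" and "Ms l = UNIV"
    and "\<forall>i<l. Ms i \<subseteq> Ms (Suc i)"
    and "\<forall>i\<le>l. direct_summand (Ms i) \<and> free_of_rank (Ms i) (h i)"
    and "h 0 = 0"
    and "subspace_k Lbar"
    and "d' 0 = 0"
    and "d' l = int (dim_k (Lbar \<inter> red ` Ms l))"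
    and "\<forall>i<l. 0 \<le> d' (Suc i) - d' i \<and> d' (Suc i) - d' i \<le> int (h (Suc i)) - int (h i)"
    and "\<forall>i. 1 \<le> i \<and> i \<le> l - 1 \<longrightarrow> d' i \<le> int (dim_k (Lbar \<inter> red ` Ms i))"
  shows "\<exists>L. direct_summand L \<and> red ` L = Lbar \<and>
           (\<forall>i. 1 \<le> i \<and> i \<le> l \<longrightarrow>
              int (dim_K (tensor_K L \<inter> tensor_K (Ms i))) = d' i)"
proof -
  have MsD: "direct_summand (Ms i)" if "i \<le> l" for i using assms(4) that by blast
  have free: "free_of_rank (Ms i) (h i)" if "i \<le> l" for i using assms(4) that by blast
  have Msub: "Rm.subspace (Ms i)" if "i \<le> l" for i using direct_summand_satur(2)[OF MsD[OF that]] .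
  have Msat: "satur (Ms i)" if "i \<le> l" for i using direct_summand_satur(1)[OF MsD[OF that]] .
  have Mmono: "Ms i \<subseteq> Ms i'" if "i \<le> i'" "i' \<le> l" for i i'
    using chain_mono[of l Ms i i'] assms(3) that by blast
  have Mbsub: "vec.subspace (red ` Ms i)" if "i \<le> l" for i using red_subspace[OF Msub[OF that]] .
  have Mbdim: "vec.dim (red ` Ms i) = h i" if "i \<le> l" for i using red_free_dim[OF MsD[OF that] free[OF that]] .
  have Mbl: "red ` Ms l = UNIV"
  proof -
    have "x \<in> red ` UNIV" for x using red_cl[of x] by (metis rangeI)
    then show ?thesis using assms(2) by auto
  qed
  have Lsub: "vec.subspace Lbar" using assms(6) unfolding subspace_k_def scale_k_eq .
  have dimk: "dim_k S = vec.dim S" for S :: "('a ^ 'n) set" unfolding dim_k_def scale_k_eq ..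
  define V where "V i = Lbar \<inter> red ` Ms i" for i
  have Vsub: "vec.subspace (V i)" if "i \<le> l" for i
    unfolding V_def using Lsub Mbsub[OF that] by (rule vec.subspace_inter)
  have Vmono: "V i \<subseteq> V (Suc i)" if "i < l" for i unfolding V_def using assms(3) that by auto
  have V0: "V 0 = {0}" unfolding V_def using assms(1) vec.subspace_0[OF Lsub] by auto
  have Vl: "V l = Lbar" unfolding V_def using Mbl by simp
  define D where "D i = vec.dim (V i)" for i
  obtain lb where lb1: "imod (*s) {0} {..<D l} lb" and lb2: "\<forall>i\<le>l. vec.span (lb ` {..<D i}) = V i"
    using flag_basis[of l V, OF Vsub Vmono V0] unfolding D_def by blast
  define d where "d = D l"
  have Dmono: "D i' \<le> D i" if "i' \<le> i" "i \<le> l" for i i'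
    unfolding D_def using chain_mono[of l V i' i] Vmono that by (intro vec.dim_subset) blast
  have dl: "d' l = int d" using assms(8) unfolding dimk d_def D_def V_def by simp
  have dle: "d' i \<le> int (D i)" if "1 \<le> i" "i \<le> l - 1" for i
    using assms(10) that unfolding dimk D_def V_def by simp
  have dpos: "0 \<le> d' i" if "i \<le> l" for i
    using that
  proof (induction i)
    case 0 then show ?case using assms(7) by simp
  next
    case (Suc i)
    then have "0 \<le> d' i" "0 \<le> d' (Suc i) - d' i" using assms(9) by auto
    then show ?case by linarith
  qed
  define e where "e i = nat (d' i)" for i
  have e_int: "int (e i) = d' i" if "i \<le> l" for i using dpos[OF that] unfolding e_def by simp
  have e0: "e 0 = 0" unfolding e_def using assms(7) by simp
  have el: "e l = d" unfolding e_def using dl by simp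
  have e_step: "e i \<le> e (Suc i) \<and> e (Suc i) + h i \<le> h (Suc i) + e i" if "i < l" for i
  proof -
    have "int (e i) = d' i" "int (e (Suc i)) = d' (Suc i)" using e_int that by auto
    moreover have "0 \<le> d' (Suc i) - d' i \<and> d' (Suc i) - d' i \<le> int (h (Suc i)) - int (h i)"
      using assms(9) that by blast
    ultimately show ?thesis by linarith
  qed
  have emono: "e i' \<le> e i" if "i' \<le> i" "i \<le> l" for i i'
  proof -
    have "{..<e i'} \<subseteq> {..<e i}"
      using chain_mono[of l "\<lambda>i. {..<e i}" i' i] e_step that by auto
    then show ?thesis by simp
  qed
  have eD: "e i \<le> D i" if il: "i \<le> l" for i
  proof (cases "i = 0")
    case True then show ?thesis using e0 by simp
  next
    case False
    show ?thesis
    proof (cases "i = l")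
      case True then show ?thesis using el d_def by simp
    next
      case False2: False
      then have "1 \<le> i" "i \<le> l - 1" using \<open>i \<noteq> 0\<close> il by auto
      then have "d' i \<le> int (D i)" by (rule dle)
      then show ?thesis using e_int[OF il] by simp
    qed
  qed
  define lam where "lam j = (LEAST i. j < e i)" for j
  define a where "a j = (LEAST i. j < D i)" for j
  have lam_props: "lam j \<le> l \<and> j < e (lam j)" if "j < d" for j
  proof -
    have ex: "j < e l" using that el by simp
    show ?thesis unfolding lam_def using Least_le[of "\<lambda>i. j < e i", OF ex] LeastI[of "\<lambda>i. j < e i", OF ex]
      by auto
  qed
  have lam_iff: "lam j \<le> i \<longleftrightarrow> j < e i" if "j < d" "i \<le> l" for i j
  proof
    assume "lam j \<le> i"
    then show "j < e i" using emono[of "lam j" i] lam_props[OF that(1)] that(2) by auto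
  next
    assume "j < e i"
    then show "lam j \<le> i" unfolding lam_def by (rule Least_le)
  qed
  have a_props: "a j \<le> l \<and> j < D (a j)" if "j < d" for j
  proof -
    have ex: "j < D l" using that d_def by simp
    show ?thesis unfolding a_def using Least_le[of "\<lambda>i. j < D i", OF ex] LeastI[of "\<lambda>i. j < D i", OF ex]
      by auto
  qed
  have a_iff: "a j \<le> i \<longleftrightarrow> j < D i" if "j < d" "i \<le> l" for i j
  proof
    assume "a j \<le> i"
    then show "j < D i" using Dmono[of "a j" i] a_props[OF that(1)] that(2) by auto
  next
    assume "j < D i"
    then show "a j \<le> i" unfolding a_def by (rule Least_le)
  qed
  have lam1: "1 \<le> lam j" if "j < d" for j
    using lam_props[OF that] e0 by (cases "lam j") auto
  have a_lam: "a j \<le> lam j" if "j < d" for j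
  proof -
    have "j < e (lam j)" "lam j \<le> l" using lam_props[OF that] by auto
    then have "j < D (lam j)" using eD[of "lam j"] by auto
    then show ?thesis using a_iff[OF that \<open>lam j \<le> l\<close>] by simp
  qed
  have lb_V: "lb j \<in> V i" if "j < D i" "i \<le> l" for i j
  proof -
    have "lb j \<in> vec.span (lb ` {..<D i})" using that by (intro vec.span_base) auto
    then show ?thesis using lb2 that(2) by auto
  qed
  have lb_a: "lb j \<in> red ` Ms (a j)" "lb j \<in> Lbar" if "j < d" for j
    using lb_V[of j "a j"] a_props[OF that] unfolding V_def by auto
  define J where "J m = {j. j < d \<and> lam j = m}" for m
  define Nt where "Nt m = {j \<in> J m. a j = m}" for m
  have fJ: "finite (J m)" for m unfolding J_def by auto
  have NtJ: "Nt m \<subseteq> J m" for m unfolding Nt_def by auto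
  have J_eq: "J m = {e (m - 1)..<e m}" if m: "1 \<le> m" "m \<le> l" for m
  proof -
    have edl: "e m \<le> d" using emono[of m l] m el by simp
    have "j \<in> J m \<longleftrightarrow> j \<in> {e (m - 1)..<e m}" for j
    proof
      assume "j \<in> J m"
      then have j: "j < d" "lam j = m" unfolding J_def by auto
      have "\<not> lam j \<le> m - 1" using j m by auto
      then have "\<not> j < e (m - 1)" using lam_iff[OF j(1), of "m - 1"] m by auto
      moreover have "j < e m" using lam_iff[OF j(1), of m] m j by auto
      ultimately show "j \<in> {e (m - 1)..<e m}" by auto
    next
      assume "j \<in> {e (m - 1)..<e m}"
      then have j: "j < d" "e (m - 1) \<le> j" "j < e m" using edl by auto
      then have "lam j \<le> m" "\<not> lam j \<le> m - 1"
        using lam_iff[OF j(1), of m] lam_iff[OF j(1), of "m - 1"] m by auto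
      then show "j \<in> J m" using j unfolding J_def by auto
    qed
    then show ?thesis by blast
  qed
  have J_card: "card (J m) + h (m - 1) \<le> h m" if m: "1 \<le> m" "m \<le> l" for m
  proof -
    have "m - 1 < l" "Suc (m - 1) = m" using m by auto
    then have "e (m - 1) \<le> e m \<and> e m + h (m - 1) \<le> h m + e (m - 1)" using e_step[of "m - 1"] by simp
    moreover have "card (J m) = e m - e (m - 1)" using J_eq[OF m] by simp
    ultimately show ?thesis by linarith
  qed
  have Nt_sub: "Nt m \<subseteq> {j. D (m - 1) \<le> j \<and> j < D m}" if m: "1 \<le> m" "m \<le> l" for m
  proof
    fix j assume "j \<in> Nt m"
    then have j: "j < d" "a j = m" unfolding Nt_def J_def by auto
    have "\<not> a j \<le> m - 1" using j m by auto
    then have "\<not> j < D (m - 1)" using a_iff[OF j(1), of "m - 1"] m by auto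
    moreover have "j < D m" using a_iff[OF j(1), of m] m j by auto
    ultimately have "j < D m" "\<not> j < D (m - 1)" by auto
    then show "j \<in> {j. D (m - 1) \<le> j \<and> j < D m}" by auto
  qed
  have natind': "imod (*s) (red ` Ms (m - 1)) (Nt m) lb" if m: "1 \<le> m" "m \<le> l" for m
  proof -
    have sp: "vec.span (lb ` {..<D (m - 1)}) = Lbar \<inter> red ` Ms (m - 1)"
      using lb2 m unfolding V_def by auto
    have DD: "D (m - 1) \<le> D m" "D m \<le> d" using Dmono m d_def by auto
    have inL: "lb ` {..<D m} \<subseteq> Lbar" using lb_V m unfolding V_def by auto
    have "imod (*s) (red ` Ms (m - 1)) {j. D (m - 1) \<le> j \<and> j < D m} lb"
      using natind[OF lb1[folded d_def] Mbsub[of "m - 1"] Lsub sp DD inL] m by simp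
    then show ?thesis by (rule vec.my_imod_subset[OF _ Nt_sub[OF m]]) simp
  qed
  have rho_ex: "\<exists>\<rho>. (\<forall>j\<in>Nt m. \<rho> j = lb j) \<and> \<rho> ` J m \<subseteq> red ` Ms m \<and> imod (*s) (red ` Ms (m - 1)) (J m) \<rho>"
    if m: "1 \<le> m" "m \<le> l" for m
  proof -
    have UW: "red ` Ms (m - 1) \<subseteq> red ` Ms m" using Mmono[of "m - 1" m] m by auto
    have rW: "lb ` Nt m \<subseteq> red ` Ms m"
    proof
      fix x assume "x \<in> lb ` Nt m"
      then obtain j where j: "j < d" "a j = m" "x = lb j" unfolding Nt_def J_def by auto
      then show "x \<in> red ` Ms m" using lb_a(1)[OF j(1)] by simp
    qed
    have cc: "card (Nt m) + card (J m - Nt m) = card (J m)"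
      using card_Diff_subset[OF finite_subset[OF NtJ fJ] NtJ] card_mono[OF fJ NtJ] by simp
    have card: "card (Nt m) + card (J m - Nt m) + vec.dim (red ` Ms (m - 1)) \<le> vec.dim (red ` Ms m)"
      using cc J_card[OF m] Mbdim[of m] Mbdim[of "m - 1"] m by simp
    have un: "Nt m \<union> (J m - Nt m) = J m" using NtJ by auto
    have "\<exists>\<rho>'. (\<forall>j\<in>Nt m. \<rho>' j = lb j) \<and> \<rho>' ` (Nt m \<union> (J m - Nt m)) \<subseteq> red ` Ms m \<and>
        imod (*s) (red ` Ms (m - 1)) (Nt m \<union> (J m - Nt m)) \<rho>'"
      by (rule vec.my_extend_imod[OF Mbsub[of "m - 1"] Mbsub[of m] UW _ finite_subset[OF NtJ fJ] _ natind'[OF m] rW card])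
        (use m fJ in auto)
    then show ?thesis unfolding un .
  qed
  define P where "P m \<rho> \<longleftrightarrow> (\<forall>j\<in>Nt m. \<rho> j = lb j) \<and> \<rho> ` J m \<subseteq> red ` Ms m \<and> imod (*s) (red ` Ms (m - 1)) (J m) \<rho>"
    for m and \<rho> :: "nat \<Rightarrow> 'a ^ 'n"
  have exP: "\<forall>m. \<exists>\<rho>. 1 \<le> m \<and> m \<le> l \<longrightarrow> P m \<rho>"
  proof
    fix m
    show "\<exists>\<rho>. 1 \<le> m \<and> m \<le> l \<longrightarrow> P m \<rho>"
    proof (cases "1 \<le> m \<and> m \<le> l")
      case True
      then obtain \<rho> where "P m \<rho>" using rho_ex[of m] unfolding P_def by blast
      then show ?thesis by blast
    next
      case False then show ?thesis by blast
    qed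
  qed
  obtain RR where RR0: "\<forall>m. 1 \<le> m \<and> m \<le> l \<longrightarrow> P m (RR m)" using choice[OF exP] by blast
  have RR: "(\<forall>j\<in>Nt m. RR m j = lb j) \<and> RR m ` J m \<subseteq> red ` Ms m \<and> imod (*s) (red ` Ms (m - 1)) (J m) (RR m)"
    if "1 \<le> m" "m \<le> l" for m
    using RR0 that unfolding P_def by blast
  define rho where "rho j = RR (lam j) j" for j
  have jJ: "j \<in> J (lam j)" if "j < d" for j unfolding J_def using that by auto
  have rho_in: "rho j \<in> red ` Ms (lam j)" if "j < d" for j
  proof -
    have "RR (lam j) ` J (lam j) \<subseteq> red ` Ms (lam j)" using RR[of "lam j"] lam1[OF that] lam_props[OF that] by auto
    then show ?thesis using jJ[OF that] unfolding rho_def by auto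
  qed
  have rho_nat: "rho j = lb j" if "j < d" "a j = lam j" for j
  proof -
    have "j \<in> Nt (lam j)" unfolding Nt_def using jJ[OF that(1)] that(2) by auto
    moreover have "\<forall>i\<in>Nt (lam j). RR (lam j) i = lb i" using RR[of "lam j"] lam1[OF that(1)] lam_props[OF that(1)] by auto
    ultimately show ?thesis unfolding rho_def by auto
  qed
  have rho_ind: "imod (*s) (red ` Ms (m - 1)) (J m) rho" if m: "1 \<le> m" "m \<le> l" for m
  proof -
    have "imod (*s) (red ` Ms (m - 1)) (J m) (RR m)" using RR[OF m] by auto
    moreover have "\<And>j. j \<in> J m \<Longrightarrow> rho j = RR m j" unfolding rho_def J_def by auto
    ultimately show ?thesis using vec.my_imod_cong[of "J m" rho "RR m" "red ` Ms (m - 1)"] by simp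
  qed
  define g where "g j = (SOME y. y \<in> Ms (a j) \<and> red y = lb j)" for j
  have g: "g j \<in> Ms (a j) \<and> red (g j) = lb j" if "j < d" for j
  proof -
    have "\<exists>y. y \<in> Ms (a j) \<and> red y = lb j" using lb_a(1)[OF that] by auto
    then show ?thesis unfolding g_def by (rule someI_ex)
  qed
  define w where "w j = (if a j = lam j then 0 else (SOME y. y \<in> Ms (lam j) \<and> red y = rho j))" for j
  have w2: "w j \<in> Ms (lam j) \<and> red (w j) = rho j" if "j < d" "a j \<noteq> lam j" for j
  proof -
    have "\<exists>y. y \<in> Ms (lam j) \<and> red y = rho j" using rho_in[OF that(1)] by auto
    then have "(SOME y. y \<in> Ms (lam j) \<and> red y = rho j) \<in> Ms (lam j) \<and> red (SOME y. y \<in> Ms (lam j) \<and> red y = rho j) = rho j"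
      by (rule someI_ex)
    then show ?thesis unfolding w_def using that(2) by simp
  qed
  have w1: "w j \<in> Ms (lam j)" if "j < d" for j
  proof (cases "a j = lam j")
    case True then show ?thesis unfolding w_def using Rm.subspace_0[OF Msub[of "lam j"]] lam_props[OF that] by simp
  next
    case False then show ?thesis using w2[OF that] by simp
  qed
  define v where "v j = g j + fps_X *s w j" for j
  have v_red: "red (v j) = lb j" if "j < d" for j unfolding v_def using g[OF that] by simp
  have v_in: "v j \<in> Ms (lam j)" if "j < d" for j
  proof -
    have "g j \<in> Ms (lam j)" using g[OF that] Mmono[of "a j" "lam j"] a_lam[OF that] lam_props[OF that] by auto
    then show ?thesis unfolding v_def using w1[OF that] Msub[of "lam j"] lam_props[OF that]
      by (intro Rm.subspace_add Rm.subspace_scale) auto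
  qed
  have Rind: "imod (*s) (Ms (m - 1)) (J m) v" if m: "1 \<le> m" "m \<le> l" for m
  proof (rule Rclaim[of "Ms (m - 1)" "J m" "Nt m" v g w rho])
    show "Rm.subspace (Ms (m - 1))" "satur (Ms (m - 1))" using Msub Msat m by auto
    show "finite (J m)" "Nt m \<subseteq> J m" using fJ NtJ by auto
    show "\<And>j. j \<in> J m \<Longrightarrow> v j = g j + fps_X *s w j" unfolding v_def by simp
    show "w j = 0 \<and> red (g j) = rho j" if "j \<in> Nt m" for j
    proof -
      have j: "j < d" "lam j = m" "a j = m" using that unfolding Nt_def J_def by auto
      then show ?thesis using g[OF j(1)] rho_nat[OF j(1)] unfolding w_def by simp
    qed
    show "g j \<in> Ms (m - 1) \<and> red (w j) = rho j" if "j \<in> J m" "j \<notin> Nt m" for j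
    proof -
      have j: "j < d" "lam j = m" "a j \<noteq> m" using that unfolding Nt_def J_def by auto
      then have "a j \<le> m - 1" using a_lam[OF j(1)] by auto
      moreover have "m - 1 \<le> l" using m by auto
      ultimately have "Ms (a j) \<subseteq> Ms (m - 1)" by (rule Mmono)
      then have "g j \<in> Ms (m - 1)" using g[OF j(1)] by auto
      then show ?thesis using w2[OF j(1)] j by auto
    qed
    show "imod (*s) (red ` Ms (m - 1)) (J m) rho" by (rule rho_ind[OF m])
  qed
  have Kind: "imod (*s) (tensor_K (Ms (m - 1))) (J m) (\<lambda>j. ext (v j))" if m: "1 \<le> m" "m \<le> l" for m
    using K_indep[OF Msub[of "m - 1"] Msat[of "m - 1"] fJ Rind[OF m]] m by simp
  define F where "F i = tensor_K (Ms i)" for i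
  have level: "vec.dim (vec.span ((\<lambda>j. ext (v j)) ` {..<d}) \<inter> F i) = card {j. j < d \<and> lam j \<le> i}"
    if i: "i \<le> l" for i
  proof (rule vec.my_level_dim[of l F d lam "\<lambda>j. ext (v j)" i])
    show "vec.subspace (F i)" for i unfolding F_def tensor_K_eq by simp
    show "F i \<subseteq> F (Suc i)" if "i < l" for i
      unfolding F_def tensor_K_eq using assms(3) that by (intro vec.span_mono image_mono) auto
    show "1 \<le> lam j \<and> lam j \<le> l \<and> ext (v j) \<in> F (lam j)" if "j < d" for j
      using lam1[OF that] lam_props[OF that] v_in[OF that] unfolding F_def tensor_K_eq
      by (auto intro: vec.span_base)
    show "imod (*s) (F (m - 1)) {j. j < d \<and> lam j = m} (\<lambda>j. ext (v j))" if "1 \<le> m" "m \<le> l" for m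
      using Kind[OF that] unfolding F_def J_def .
    show "i \<le> l" by (rule i)
  qed
  have card_e: "card {j. j < d \<and> lam j \<le> i} = e i" if i: "i \<le> l" for i
  proof -
    have "e i \<le> d" using emono[of i l] i el by simp
    then have "{j. j < d \<and> lam j \<le> i} = {..<e i}" using lam_iff i by auto
    then show ?thesis by simp
  qed
  define L where "L = Rm.span (v ` {..<d})"
  have dsL: "direct_summand L" unfolding L_def
  proof (rule ds_span)
    show "imod (*s) {0} {..<d} (\<lambda>j. red (v j))"
      using lb1 v_red vec.my_imod_cong[of "{..<d}" "\<lambda>j. red (v j)" lb "{0}"] unfolding d_def by auto
  qed
  have redL: "red ` L = Lbar"
  proof -
    have "red ` L = vec.span (red ` v ` {..<d})" unfolding L_def by (rule red_span)
    also have "red ` v ` {..<d} = lb ` {..<D l}" using v_red unfolding d_def by (auto simp: image_image)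
    also have "vec.span \<dots> = Lbar" using lb2 Vl by auto
    finally show ?thesis .
  qed
  have tL: "tensor_K L = vec.span ((\<lambda>j. ext (v j)) ` {..<d})"
    unfolding L_def tensor_K_eq ext_span by (simp add: image_image)
  show ?thesis
  proof (intro exI[of _ L] conjI allI impI)
    show "direct_summand L" by (rule dsL)
    show "red ` L = Lbar" by (rule redL)
    fix i assume i: "1 \<le> i \<and> i \<le> l"
    have "dim_K (tensor_K L \<inter> tensor_K (Ms i)) = vec.dim (vec.span ((\<lambda>j. ext (v j)) ` {..<d}) \<inter> F i)"
      unfolding dim_K_def scale_K_eq tL F_def ..
    also have "\<dots> = e i" using level[of i] card_e[of i] i by simp
    finally show "int (dim_K (tensor_K L \<inter> tensor_K (Ms i))) = d' i" using e_int[of i] i by simp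
  qed
qed

end
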